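(* Fix a slot $n$ and a state $(\mathbf x(n),\mathbf g(n))$ of the model in the context. Let $\pi\in\Pi$ choose the feasible withdrawal vector $\mathbf y(n)$ at slot $n$, let $\mathbf y^{MB}(n)$ be the withdrawal vector chosen by an MB policy at the same slot in the same state, and let $\mathbf D=\mathbf y^{MB}(n)-\mathbf y(n)\in\mathbb Z^{L+1}$. Then (a) if $\mathbf D=0$, $\pi$ has the MB property at time $n$; and (b) if $\pi$ has the MB property at time $n$, every component of $\mathbf D$ equals $0$, $+1$ or $-1$.
   Context: Model: slotted time; real queues $1,\dots,L$, dummy queue $0$, $K$ identical servers. In slot $n$ the state is $(\mathbf x(n),\mathbf g(n))$: $x_i(n)\in\mathbb Z_+$ queue lengths ($x_0=0$), $g_{i,j}(n)\in\{0,1\}$ connectivity of queue $i$ to server $j$, with $g_{0,j}=1$. A scheduling control $\mathbf q\in\{0,\dots,L\}^K$ assigns server $j$ to queue $q_j$ ($0$ = idle); it is feasible if $g_{q_j,j}=1$ for all $j$ and for each $i\ge1$ at most $x_i$ servers are assigned to $i$. Its withdrawal vector is $y_i=\#\{j:q_j=i\}$, $i=0,\dots,L$; feasible withdrawal vectors are those arising from feasible $\mathbf q$; their set is $\mathcal Y(\mathbf x,\mathbf g)$. A policy chooses at each slot a feasible withdrawal vector as a measurable function of the history; $\Pi$ is the set of policies. Updated sizes: $\hat x_i(n)=x_i(n)-y_i(n)$ (so $\hat x_0(n)=-y_0(n)$). Imbalance index: $\kappa_n(\pi)=\sum_{i=1}^{L}\sum_{j=i+1}^{L+1}(\hat x_{[i]}(n)-\hat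 x_{[j]}(n))$, where $[1],\dots,[L]$ order the real queues by non-increasing $\hat x$ and $[L+1]=0$. $\pi$ has the MB property at time $n$ if its $\mathbf y(n)$ minimizes $\kappa_n$ over $\mathcal Y(\mathbf x(n),\mathbf g(n))$; an MB policy has the MB property at every slot. *)

theory Defs
  imports Main
begin

(* Queues are indexed 0..L (0 = dummy queue), servers are indexed 0..K-1.
   x i : queue length of queue i;  g i j : connectivity of queue i to server j.
   A scheduling control q assigns server j (j < K) to queue q j. *)

definition feasible_control :: "nat \<Rightarrow> nat \<Rightarrow> (nat \<Rightarrow> nat) \<Rightarrow> (nat \<Rightarrow> nat \<Rightarrow> bool) \<Rightarrow> (nat \<Rightarrow> nat) \<Rightarrow> bool" where
  "feasible_control L K x g q \<longleftrightarrow>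
     (\<forall>j<K. q j \<le> L \<and> g (q j) j) \<and>
     (\<forall>i\<in>{1..L}. card {j. j < K \<and> q j = i} \<le> x i)"

definition withdrawal :: "nat \<Rightarrow> (nat \<Rightarrow> nat) \<Rightarrow> nat \<Rightarrow> nat" where
  "withdrawal K q i = card {j. j < K \<and> q j = i}"

definition feasible_W :: "nat \<Rightarrow> nat \<Rightarrow> (nat \<Rightarrow> nat) \<Rightarrow> (nat \<Rightarrow> nat \<Rightarrow> bool) \<Rightarrow> (nat \<Rightarrow> nat) set" where
  "feasible_W L K x g = {withdrawal K q | q. feasible_control L K x g q}"

(* updated sizes \<hat>x_i = x_i - y_i (with x_0 = 0, so \<hat>x_0 = -y_0) *)
definition xhat :: "(nat \<Rightarrow> nat) \<Rightarrow> (nat \<Rightarrow> nat) \<Rightarrow> nat \<Rightarrow> int" where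
  "xhat x y i = int (x i) - int (y i)"

(* imbalance index: the real queues sorted by non-increasing \<hat>x, followed by
   the dummy queue 0 in position L+1; list positions are 0-based here. *)
definition kappa :: "nat \<Rightarrow> (nat \<Rightarrow> nat) \<Rightarrow> (nat \<Rightarrow> nat) \<Rightarrow> int" where
  "kappa L x y =
     (let vs = rev (sort (map (xhat x y) [1..<L+1])) @ [xhat x y 0]
      in (\<Sum>i<L. \<Sum>j\<in>{i+1..L}. vs ! i - vs ! j))"

definition MB_at :: "nat \<Rightarrow> nat \<Rightarrow> (nat \<Rightarrow> nat) \<Rightarrow> (nat \<Rightarrow> nat \<Rightarrow> bool) \<Rightarrow> (nat \<Rightarrow> nat) \<Rightarrow> bool" where
  "MB_at L K x g y \<longleftrightarrow> y \<in> feasible_W L K x g \<and>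
     (\<forall>y'\<in>feasible_W L K x g. kappa L x y \<le> kappa L x y')"

end

theory Submission
  imports Defs
begin



definition DS :: "(nat \<Rightarrow> int) \<Rightarrow> nat set \<Rightarrow> int" where
  "DS v S = (\<Sum>i\<in>S. \<Sum>j\<in>S. \<bar>v i - v j\<bar>)"

definition Q :: "nat \<Rightarrow> (nat \<Rightarrow> int) \<Rightarrow> int" where
  "Q L v = DS v {1..L} + 2 * (\<Sum>i\<in>{1..L}. v i) - 2 * int L * v 0"

lemma dsum_sym:
  fixes F :: "nat \<Rightarrow> nat \<Rightarrow> int"
  assumes "\<And>i j. F i j = F j i" "\<And>i. F i i = 0"
  shows "(\<Sum>i<n. \<Sum>j<n. F i j) = 2 * (\<Sum>i<n. \<Sum>j\<in>{i+1..<n}. F i j)"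
proof (induction n)
  case 0 then show ?case by simp
next
  case (Suc n)
  have e: "\<And>i. i < n \<Longrightarrow> {i+1..<Suc n} = insert n {i+1..<n}" by auto
  have "(\<Sum>i<Suc n. \<Sum>j<Suc n. F i j) = (\<Sum>i<n. \<Sum>j<n. F i j) + (\<Sum>i<n. F i n) + (\<Sum>j<n. F n j)"
    using assms(2) by (simp add: sum.distrib)
  also have "(\<Sum>j<n. F n j) = (\<Sum>i<n. F i n)" using assms(1) by simp
  also have "(\<Sum>i<Suc n. \<Sum>j\<in>{i+1..<Suc n}. F i j) = (\<Sum>i<n. \<Sum>j\<in>{i+1..<n}. F i j) + (\<Sum>i<n. F i n)"
    by (simp add: e sum.distrib)
  ultimately show ?case using Suc by simp
qed

lemma sum_list_map_nth: "sum_list (map h s) = (\<Sum>i<length s. h (s ! i))"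
  by (simp add: sum_list_sum_nth atLeast0LessThan)

lemma sum_list_insort: "sum_list (map (h::int\<Rightarrow>int) (insort_key f x xs)) = h x + sum_list (map h xs)"
  by (induction xs) (auto simp: algebra_simps)

lemma sum_list_rev_sort: "sum_list (map (h::int\<Rightarrow>int) (rev (sort l))) = sum_list (map h (l::int list))"
proof -
  have "sum_list (map h (sort l)) = sum_list (map h l)"
    by (induction l) (auto simp: sum_list_insort)
  then show ?thesis by (metis rev_map sum_list_rev)
qed

lemma sl_upt: "sum_list (map (f::nat\<Rightarrow>int) [1..<L+1]) = (\<Sum>i\<in>{1..L}. f i)"
proof -
  have "{1..<L+1} = {1..L}" by auto
  then show ?thesis using sum_set_upt_conv_sum_list_nat[of f 1 "L+1"] by (simp only: set_upt)
qed

lemma kappa_Q: "2 * kappa L x y = Q L (xhat x y)"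
proof -
  define v where "v = xhat x y"
  define l where "l = map v [1..<L+1]"
  define s where "s = rev (sort l)"
  define vs where "vs = s @ [v 0]"
  have ls: "length s = L" by (simp add: s_def l_def)
  have ms: "\<And>h::int\<Rightarrow>int. sum_list (map h s) = sum_list (map h l)" by (simp add: s_def sum_list_rev_sort)
  have k: "kappa L x y = (\<Sum>i<L. \<Sum>j\<in>{i+1..L}. vs ! i - vs ! j)"
    by (simp add: kappa_def vs_def s_def l_def v_def Let_def)
  have st: "sorted_wrt (\<ge>) s" unfolding s_def sorted_wrt_rev
    using sorted_sort[of l] by simp
  have s1: "(\<Sum>j\<in>{i+1..L}. vs ! i - vs ! j) = (\<Sum>j\<in>{i+1..<L}. \<bar>s!i - s!j\<bar>) + (s!i - v 0)"
    if "i < L" for i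
  proof -
    have "{i+1..L} = insert L {i+1..<L}" using that by auto
    then have "(\<Sum>j\<in>{i+1..L}. vs ! i - vs ! j) = (vs!i - vs!L) + (\<Sum>j\<in>{i+1..<L}. vs ! i - vs ! j)"
      by simp
    moreover have "vs!L = v 0" by (simp add: vs_def nth_append ls)
    moreover have "vs!i = s!i" using that by (simp add: vs_def nth_append ls)
    moreover have "(\<Sum>j\<in>{i+1..<L}. vs ! i - vs ! j) = (\<Sum>j\<in>{i+1..<L}. \<bar>s!i - s!j\<bar>)"
    proof (rule sum.cong)
      fix j assume j: "j \<in> {i+1..<L}"
      then have "s!j \<le> s!i" using sorted_wrt_nth_less[OF st, of i j] ls by auto
      then show "vs ! i - vs ! j = \<bar>s!i - s!j\<bar>" using j that by (simp add: vs_def nth_append ls)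
    qed simp
    ultimately show ?thesis by simp
  qed
  have "kappa L x y = (\<Sum>i<L. \<Sum>j\<in>{i+1..<L}. \<bar>s!i - s!j\<bar>) + (\<Sum>i<L. s!i) - int L * v 0"
  proof -
    have "kappa L x y = (\<Sum>i<L. (\<Sum>j\<in>{i+1..<L}. \<bar>s!i - s!j\<bar>) + (s!i - v 0))"
      unfolding k by (rule sum.cong) (simp_all only: lessThan_iff s1)
    also have "\<dots> = (\<Sum>i<L. \<Sum>j\<in>{i+1..<L}. \<bar>s!i - s!j\<bar>) + ((\<Sum>i<L. s!i) - (\<Sum>i<L. v 0))"
      by (simp only: sum.distrib sum_subtractf)
    finally show ?thesis by simp
  qed
  moreover have "(\<Sum>i<L. s!i) = (\<Sum>i\<in>{1..L}. v i)"
  proof -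
    have "(\<Sum>i<L. s!i) = sum_list (map id s)" using sum_list_map_nth[of id s] ls by simp
    also have "\<dots> = sum_list (map id l)" using ms by blast
    also have "\<dots> = (\<Sum>i\<in>{1..L}. v i)"
      by (simp only: l_def map_map o_def id_apply sl_upt)
    finally show ?thesis .
  qed
  moreover have "2 * (\<Sum>i<L. \<Sum>j\<in>{i+1..<L}. \<bar>s!i - s!j\<bar>) = DS v {1..L}"
  proof -
    have "2 * (\<Sum>i<L. \<Sum>j\<in>{i+1..<L}. \<bar>s!i - s!j\<bar>) = (\<Sum>i<L. \<Sum>j<L. \<bar>s!i - s!j\<bar>)"
      by (rule dsum_sym[symmetric]) auto
    also have "\<dots> = sum_list (map (\<lambda>a. sum_list (map (\<lambda>b. \<bar>a - b\<bar>) s)) s)"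
      by (simp add: sum_list_map_nth ls)
    also have "\<dots> = sum_list (map (\<lambda>a. sum_list (map (\<lambda>b. \<bar>a - b\<bar>) l)) s)"
      using ms by simp
    also have "\<dots> = sum_list (map (\<lambda>a. sum_list (map (\<lambda>b. \<bar>a - b\<bar>) l)) l)"
      using ms by blast
    also have "\<dots> = DS v {1..L}"
      by (simp only: DS_def l_def map_map o_def sl_upt)
    finally show ?thesis .
  qed
  ultimately show ?thesis by (simp add: Q_def v_def algebra_simps)
qed




lemma sum2_split1:
  fixes f :: "nat \<Rightarrow> nat \<Rightarrow> int"
  assumes "finite S" "a \<in> S"
  shows "(\<Sum>i\<in>S. \<Sum>j\<in>S. f i j) = (\<Sum>i\<in>S-{a}. \<Sum>j\<in>S-{a}. f i j) + (\<Sum>j\<in>S-{a}. f a j + f j a) + f a a"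
proof -
  have S: "S = insert a (S - {a})" using assms by auto
  have g: "\<And>R. finite R \<Longrightarrow> a \<notin> R \<Longrightarrow> (\<Sum>i\<in>insert a R. \<Sum>j\<in>insert a R. f i j) = (\<Sum>i\<in>R. \<Sum>j\<in>R. f i j) + (\<Sum>j\<in>R. f a j + f j a) + f a a"
    by (simp add: sum.distrib algebra_simps)
  have "(\<Sum>i\<in>S. \<Sum>j\<in>S. f i j) = (\<Sum>i\<in>insert a (S-{a}). \<Sum>j\<in>insert a (S-{a}). f i j)"
    using S by simp
  also have "\<dots> = (\<Sum>i\<in>S-{a}. \<Sum>j\<in>S-{a}. f i j) + (\<Sum>j\<in>S-{a}. f a j + f j a) + f a a"
    using assms by (intro g) auto
  finally show ?thesis .
qed

lemma sum2_split2:
  fixes f :: "nat \<Rightarrow> nat \<Rightarrow> int"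
  assumes "finite S" "a \<in> S" "u \<in> S" "a \<noteq> u"
  shows "(\<Sum>i\<in>S. \<Sum>j\<in>S. f i j) = (\<Sum>i\<in>S-{a,u}. \<Sum>j\<in>S-{a,u}. f i j)
     + (\<Sum>j\<in>S-{a,u}. f a j + f j a + f u j + f j u) + f a a + f u u + f a u + f u a"
proof -
  have S: "S = insert a (insert u (S - {a,u}))" using assms by auto
  have g: "\<And>R. finite R \<Longrightarrow> a \<notin> R \<Longrightarrow> u \<notin> R \<Longrightarrow> (\<Sum>i\<in>insert a (insert u R). \<Sum>j\<in>insert a (insert u R). f i j) = (\<Sum>i\<in>R. \<Sum>j\<in>R. f i j)
     + (\<Sum>j\<in>R. f a j + f j a + f u j + f j u) + f a a + f u u + f a u + f u a"
    using assms(4) by (simp add: sum.distrib algebra_simps)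
  have "(\<Sum>i\<in>S. \<Sum>j\<in>S. f i j) = (\<Sum>i\<in>insert a (insert u (S-{a,u})). \<Sum>j\<in>insert a (insert u (S-{a,u})). f i j)"
    using S by simp
  also have "\<dots> = (\<Sum>i\<in>S-{a,u}. \<Sum>j\<in>S-{a,u}. f i j)
     + (\<Sum>j\<in>S-{a,u}. f a j + f j a + f u j + f j u) + f a a + f u u + f a u + f u a"
    using assms by (intro g) auto
  finally show ?thesis .
qed

lemma sum_split1: "finite S \<Longrightarrow> a \<in> S \<Longrightarrow> (\<Sum>i\<in>S. (f::nat\<Rightarrow>int) i) = f a + (\<Sum>i\<in>S-{a}. f i)"
  by (simp add: sum.remove)

lemma sum_split2: "finite S \<Longrightarrow> a \<in> S \<Longrightarrow> u \<in> S \<Longrightarrow> a \<noteq> u \<Longrightarrow>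
   (\<Sum>i\<in>S. (f::nat\<Rightarrow>int) i) = f a + f u + (\<Sum>i\<in>S-{a,u}. f i)"
  by (metis (no_types, lifting) Diff_insert2 add.assoc finite_Diff insert_Diff insert_iff sum.remove)

lemma Q_real:
  fixes v v' :: "nat \<Rightarrow> int"
  assumes a: "a \<in> {1..L}" and u: "u \<in> {1..L}" and au: "a \<noteq> u"
    and gap: "v a \<ge> v u + 2"
    and va: "v' a = v a - 1" and vu: "v' u = v u + 1"
    and oth: "\<And>i. i \<noteq> a \<Longrightarrow> i \<noteq> u \<Longrightarrow> v' i = v i"
  shows "Q L v' < Q L v"
proof -
  let ?S = "{1..L}" and ?R = "{1..L} - {a,u}"
  have f: "finite ?S" by simp
  have Rv: "\<And>i. i \<in> ?R \<Longrightarrow> v' i = v i" using oth by auto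
  have d1: "DS v' ?S = (\<Sum>i\<in>?R. \<Sum>j\<in>?R. \<bar>v' i - v' j\<bar>)
     + (\<Sum>j\<in>?R. \<bar>v' a - v' j\<bar> + \<bar>v' j - v' a\<bar> + \<bar>v' u - v' j\<bar> + \<bar>v' j - v' u\<bar>) + 0 + 0
     + \<bar>v' a - v' u\<bar> + \<bar>v' u - v' a\<bar>"
    unfolding DS_def using sum2_split2[OF f a u au, of "\<lambda>i j. \<bar>v' i - v' j\<bar>"] by simp
  have d2: "DS v ?S = (\<Sum>i\<in>?R. \<Sum>j\<in>?R. \<bar>v i - v j\<bar>)
     + (\<Sum>j\<in>?R. \<bar>v a - v j\<bar> + \<bar>v j - v a\<bar> + \<bar>v u - v j\<bar> + \<bar>v j - v u\<bar>) + 0 + 0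
     + \<bar>v a - v u\<bar> + \<bar>v u - v a\<bar>"
    unfolding DS_def using sum2_split2[OF f a u au, of "\<lambda>i j. \<bar>v i - v j\<bar>"] by simp
  have e1: "(\<Sum>i\<in>?R. \<Sum>j\<in>?R. \<bar>v' i - v' j\<bar>) = (\<Sum>i\<in>?R. \<Sum>j\<in>?R. \<bar>v i - v j\<bar>)"
    by (rule sum.cong, simp, rule sum.cong, simp, simp add: Rv)
  have e2: "(\<Sum>j\<in>?R. \<bar>v' a - v' j\<bar> + \<bar>v' j - v' a\<bar> + \<bar>v' u - v' j\<bar> + \<bar>v' j - v' u\<bar>)
      \<le> (\<Sum>j\<in>?R. \<bar>v a - v j\<bar> + \<bar>v j - v a\<bar> + \<bar>v u - v j\<bar> + \<bar>v j - v u\<bar>)"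
  proof (rule sum_mono)
    fix j assume "j \<in> ?R"
    then have "v' j = v j" by (rule Rv)
    then show "\<bar>v' a - v' j\<bar> + \<bar>v' j - v' a\<bar> + \<bar>v' u - v' j\<bar> + \<bar>v' j - v' u\<bar>
      \<le> \<bar>v a - v j\<bar> + \<bar>v j - v a\<bar> + \<bar>v u - v j\<bar> + \<bar>v j - v u\<bar>"
      using va vu gap by (simp add: abs_if)
  qed
  have e3: "\<bar>v' a - v' u\<bar> + \<bar>v' u - v' a\<bar> < \<bar>v a - v u\<bar> + \<bar>v u - v a\<bar>"
    using va vu gap by (simp add: abs_if)
  have s1: "(\<Sum>i\<in>?S. v' i) = (\<Sum>i\<in>?S. v i)"
    using sum_split2[OF f a u au, of v'] sum_split2[OF f a u au, of v] va vu
      sum.cong[OF refl Rv, of ?R] by simp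
  have z: "v' 0 = v 0" using oth a u by auto
  show ?thesis unfolding Q_def z using d1 d2 e1 e2 e3 s1 by linarith
qed

lemma Q_dummy:
  fixes v v' :: "nat \<Rightarrow> int"
  assumes a: "a \<in> {1..L}"
    and va: "v' a = v a - 1" and v0: "v' 0 = v 0 + 1"
    and oth: "\<And>i. i \<noteq> a \<Longrightarrow> i \<noteq> 0 \<Longrightarrow> v' i = v i"
  shows "Q L v' < Q L v"
proof -
  let ?S = "{1..L}" and ?R = "{1..L} - {a}"
  have f: "finite ?S" by simp
  have Rv: "\<And>i. i \<in> ?R \<Longrightarrow> v' i = v i" using oth by auto
  have d1: "DS v' ?S = (\<Sum>i\<in>?R. \<Sum>j\<in>?R. \<bar>v' i - v' j\<bar>)
     + (\<Sum>j\<in>?R. \<bar>v' a - v' j\<bar> + \<bar>v' j - v' a\<bar>) + 0"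
    unfolding DS_def using sum2_split1[OF f a, of "\<lambda>i j. \<bar>v' i - v' j\<bar>"] by simp
  have d2: "DS v ?S = (\<Sum>i\<in>?R. \<Sum>j\<in>?R. \<bar>v i - v j\<bar>)
     + (\<Sum>j\<in>?R. \<bar>v a - v j\<bar> + \<bar>v j - v a\<bar>) + 0"
    unfolding DS_def using sum2_split1[OF f a, of "\<lambda>i j. \<bar>v i - v j\<bar>"] by simp
  have e1: "(\<Sum>i\<in>?R. \<Sum>j\<in>?R. \<bar>v' i - v' j\<bar>) = (\<Sum>i\<in>?R. \<Sum>j\<in>?R. \<bar>v i - v j\<bar>)"
    by (rule sum.cong, simp, rule sum.cong, simp, simp add: Rv)
  have e2: "(\<Sum>j\<in>?R. \<bar>v' a - v' j\<bar> + \<bar>v' j - v' a\<bar>)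
      \<le> (\<Sum>j\<in>?R. (\<bar>v a - v j\<bar> + \<bar>v j - v a\<bar>) + 2)"
  proof (rule sum_mono)
    fix j assume "j \<in> ?R"
    then have "v' j = v j" by (rule Rv)
    then show "\<bar>v' a - v' j\<bar> + \<bar>v' j - v' a\<bar> \<le> (\<bar>v a - v j\<bar> + \<bar>v j - v a\<bar>) + 2"
      using va by (simp add: abs_if)
  qed
  have cR: "card ?R = L - 1" using a by simp
  have e2': "(\<Sum>j\<in>?R. (\<bar>v a - v j\<bar> + \<bar>v j - v a\<bar>) + 2) = (\<Sum>j\<in>?R. \<bar>v a - v j\<bar> + \<bar>v j - v a\<bar>) + 2 * (int L - 1)"
    using cR a by (simp add: sum.distrib of_nat_diff)
  have s1: "(\<Sum>i\<in>?S. v' i) = (\<Sum>i\<in>?S. v i) - 1"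
    using sum_split1[OF f a, of v'] sum_split1[OF f a, of v] va
      sum.cong[OF refl Rv, of ?R] by simp
  show ?thesis unfolding Q_def using d1 d2 e1 e2 e2' s1 v0 by (simp add: algebra_simps)
qed




lemma fin_w: "finite {j::nat. j < K \<and> P j}" by (rule finite_subset[of _ "{..<K}"]) auto

lemma withdrawal_upd:
  assumes "j1 < K" "f j1 = c" "b \<noteq> c"
  shows "int (withdrawal K (f(j1:=b)) i) = int (withdrawal K f i) - (if i = c then 1 else 0) + (if i = b then 1 else 0)"
proof -
  consider "i = b" | "i = c" | "i \<noteq> b" "i \<noteq> c" by blast
  then show ?thesis
  proof cases
    case 1
    have "{j. j < K \<and> (f(j1:=b)) j = i} = insert j1 {j. j < K \<and> f j = i}" using assms 1 by auto
    moreover have "j1 \<notin> {j. j < K \<and> f j = i}" using assms 1 by auto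
    moreover have fS: "finite {j. j < K \<and> f j = i}" by (rule fin_w)
    ultimately show ?thesis using 1 assms unfolding withdrawal_def by simp
  next
    case 2
    have "{j. j < K \<and> (f(j1:=b)) j = i} = {j. j < K \<and> f j = i} - {j1}" using assms 2 by auto
    moreover have j1in: "j1 \<in> {j. j < K \<and> f j = i}" using assms 2 by auto
    moreover have fS: "finite {j. j < K \<and> f j = i}" by (rule fin_w)
    ultimately have "withdrawal K (f(j1:=b)) i = withdrawal K f i - 1" unfolding withdrawal_def by simp
    moreover have "withdrawal K f i > 0" unfolding withdrawal_def
      using card_gt_0_iff[of "{j. j < K \<and> f j = i}"] fS j1in by auto
    ultimately show ?thesis using 2 assms by simp
  next
    case 3
    then have "{j. j < K \<and> (f(j1:=b)) j = i} = {j. j < K \<and> f j = i}" using assms by auto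
    then show ?thesis using 3 unfolding withdrawal_def by simp
  qed
qed

lemma exists_diff:
  assumes "withdrawal K q a < withdrawal K q' a"
  shows "\<exists>j<K. q' j = a \<and> q j \<noteq> a"
proof (rule ccontr)
  assume "\<not> ?thesis"
  then have "{j. j < K \<and> q' j = a} \<subseteq> {j. j < K \<and> q j = a}" by auto
  then have "withdrawal K q' a \<le> withdrawal K q a" unfolding withdrawal_def
    by (intro card_mono) auto
  then show False using assms by simp
qed

lemma exch:
  "n = card {j. j < K \<and> q j \<noteq> q' j} \<Longrightarrow> withdrawal K q a < withdrawal K q' a \<Longrightarrow>
   \<exists>u p p'. u \<noteq> a \<and> withdrawal K q' u < withdrawal K q u \<and>
     (\<forall>j<K. p j = q j \<or> p j = q' j) \<and> (\<forall>j<K. p' j = q j \<or> p' j = q' j) \<and>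
     (\<forall>i. int (withdrawal K p i) = int (withdrawal K q i) - (if i = u then 1 else 0) + (if i = a then 1 else 0)) \<and>
     (\<forall>i. int (withdrawal K p' i) = int (withdrawal K q' i) + (if i = u then 1 else 0) - (if i = a then 1 else 0))"
proof (induction n arbitrary: q' a)
  case 0
  have fS: "finite {j. j < K \<and> q j \<noteq> q' j}" by (rule fin_w)
  have c0: "card {j. j < K \<and> q j \<noteq> q' j} = 0" using 0(1) by (rule sym)
  have E: "{j. j < K \<and> q j \<noteq> q' j} = {}"
    using card_0_eq[OF fS] c0 by (rule iffD1)
  have eq: "q j = q' j" if "j < K" for j
  proof (rule ccontr)
    assume "q j \<noteq> q' j"
    then have "j \<in> {j. j < K \<and> q j \<noteq> q' j}" using that by simp
    then show False using E by simp
  qed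
  have "{j. j < K \<and> q j = a} = {j. j < K \<and> q' j = a}"
  proof (rule Collect_cong)
    fix j show "(j < K \<and> q j = a) = (j < K \<and> q' j = a)" by (cases "j < K") (simp_all add: eq)
  qed
  then have "withdrawal K q a = withdrawal K q' a" unfolding withdrawal_def by (rule arg_cong)
  then show ?case using 0(2) by linarith
next
  case (Suc m)
  obtain j1 where j1: "j1 < K" "q' j1 = a" "q j1 \<noteq> a" using exists_diff[OF Suc.prems(2)] by blast
  define i1 where "i1 = q j1"
  show ?case
  proof (cases "withdrawal K q' i1 < withdrawal K q i1")
    case True
    define p where "p = q(j1 := a)"
    define p' where "p' = q'(j1 := i1)"
    have "i1 \<noteq> a" using j1 i1_def by simp
    have wp: "\<forall>i. int (withdrawal K p i) = int (withdrawal K q i) - (if i = i1 then 1 else 0) + (if i = a then 1 else 0)"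
    proof
      fix i show "int (withdrawal K p i) = int (withdrawal K q i) - (if i = i1 then 1 else 0) + (if i = a then 1 else 0)"
        unfolding p_def using withdrawal_upd[of j1 K q i1 a i] i1_def j1 by simp
    qed
    have wp': "\<forall>i. int (withdrawal K p' i) = int (withdrawal K q' i) + (if i = i1 then 1 else 0) - (if i = a then 1 else 0)"
    proof
      fix i show "int (withdrawal K p' i) = int (withdrawal K q' i) + (if i = i1 then 1 else 0) - (if i = a then 1 else 0)"
        unfolding p'_def using withdrawal_upd[of j1 K q' a i1 i] i1_def j1 by simp
    qed
    have c1: "\<forall>j<K. p j = q j \<or> p j = q' j" using j1 by (auto simp: p_def)
    have c2: "\<forall>j<K. p' j = q j \<or> p' j = q' j" using j1 by (auto simp: p'_def i1_def)
    have H: "i1 \<noteq> a \<and> withdrawal K q' i1 < withdrawal K q i1 \<and>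
     (\<forall>j<K. p j = q j \<or> p j = q' j) \<and> (\<forall>j<K. p' j = q j \<or> p' j = q' j) \<and>
     (\<forall>i. int (withdrawal K p i) = int (withdrawal K q i) - (if i = i1 then 1 else 0) + (if i = a then 1 else 0)) \<and>
     (\<forall>i. int (withdrawal K p' i) = int (withdrawal K q' i) + (if i = i1 then 1 else 0) - (if i = a then 1 else 0))"
      using True \<open>i1 \<noteq> a\<close> wp wp' c1 c2 by (intro conjI)
    show ?thesis by (rule exI[of _ i1], rule exI[of _ p], rule exI[of _ p'], rule H)
  next
    case False
    define q1 where "q1 = q'(j1 := i1)"
    have "i1 \<noteq> a" using j1 i1_def by simp
    have w1: "\<forall>i. int (withdrawal K q1 i) = int (withdrawal K q' i) - (if i = a then 1 else 0) + (if i = i1 then 1 else 0)"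
    proof
      fix i show "int (withdrawal K q1 i) = int (withdrawal K q' i) - (if i = a then 1 else 0) + (if i = i1 then 1 else 0)"
        unfolding q1_def using withdrawal_upd[of j1 K q' a i1 i] i1_def j1 by simp
    qed
    have "{j. j < K \<and> q j \<noteq> q1 j} = {j. j < K \<and> q j \<noteq> q' j} - {j1}"
      using j1 i1_def by (auto simp: q1_def)
    moreover have "j1 \<in> {j. j < K \<and> q j \<noteq> q' j}" using j1 by auto
    ultimately have cm: "m = card {j. j < K \<and> q j \<noteq> q1 j}" using Suc.prems(1) by simp
    have "int (withdrawal K q1 i1) = int (withdrawal K q' i1) + 1" using w1 \<open>i1 \<noteq> a\<close> by simp
    then have lt: "withdrawal K q i1 < withdrawal K q1 i1" using False by linarith
    obtain u p p1 where IH: "u \<noteq> i1" "withdrawal K q1 u < withdrawal K q u"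
      "\<forall>j<K. p j = q j \<or> p j = q1 j" "\<forall>j<K. p1 j = q j \<or> p1 j = q1 j"
      "\<forall>i. int (withdrawal K p i) = int (withdrawal K q i) - (if i = u then 1 else 0) + (if i = i1 then 1 else 0)"
      "\<forall>i. int (withdrawal K p1 i) = int (withdrawal K q1 i) + (if i = u then 1 else 0) - (if i = i1 then 1 else 0)"
      using Suc.IH[OF cm lt] by blast
    have "u \<noteq> a"
    proof
      assume "u = a"
      then have "int (withdrawal K q1 a) = int (withdrawal K q' a) - 1" using w1 \<open>i1 \<noteq> a\<close> by simp
      moreover have "withdrawal K q1 a < withdrawal K q a" using IH(2) \<open>u = a\<close> by simp
      ultimately show False using Suc.prems(2) by linarith
    qed
    have "int (withdrawal K q1 u) = int (withdrawal K q' u)" using w1 \<open>u \<noteq> a\<close> \<open>u \<noteq> i1\<close> by simp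
    then have uq: "withdrawal K q' u < withdrawal K q u" using IH(2) by linarith
    have "p j1 = q j1 \<or> p j1 = q1 j1" using IH(3) j1(1) by blast
    then have pj1: "p j1 = i1" by (simp add: q1_def i1_def)
    define pn where "pn = p(j1 := a)"
    have wpn: "\<forall>i. int (withdrawal K pn i) = int (withdrawal K q i) - (if i = u then 1 else 0) + (if i = a then 1 else 0)"
    proof
      fix i
      have "int (withdrawal K pn i) = int (withdrawal K p i) - (if i = i1 then 1 else 0) + (if i = a then 1 else 0)"
        unfolding pn_def using withdrawal_upd[of j1 K p i1 a i] j1(1) pj1 \<open>i1 \<noteq> a\<close> by simp
      then show "int (withdrawal K pn i) = int (withdrawal K q i) - (if i = u then 1 else 0) + (if i = a then 1 else 0)"
        using IH(5) by simp
    qed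
    have wp1: "\<forall>i. int (withdrawal K p1 i) = int (withdrawal K q' i) + (if i = u then 1 else 0) - (if i = a then 1 else 0)"
    proof
      fix i
      show "int (withdrawal K p1 i) = int (withdrawal K q' i) + (if i = u then 1 else 0) - (if i = a then 1 else 0)"
        using IH(6)[rule_format, of i] w1[rule_format, of i] by simp
    qed
    have c1: "\<forall>j<K. pn j = q j \<or> pn j = q' j"
    proof (intro allI impI)
      fix j assume "j < K"
      have o: "p j = q j \<or> p j = q1 j" using IH(3) \<open>j < K\<close> by blast
      show "pn j = q j \<or> pn j = q' j"
      proof (cases "j = j1")
        case True then show ?thesis using j1 by (simp add: pn_def)
      next
        case False then show ?thesis using o by (simp add: q1_def pn_def)
      qed
    qed
    have c2: "\<forall>j<K. p1 j = q j \<or> p1 j = q' j"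
    proof (intro allI impI)
      fix j assume "j < K"
      have o: "p1 j = q j \<or> p1 j = q1 j" using IH(4) \<open>j < K\<close> by blast
      show "p1 j = q j \<or> p1 j = q' j"
      proof (cases "j = j1")
        case True then show ?thesis using o by (simp add: q1_def i1_def)
      next
        case False then show ?thesis using o by (simp add: q1_def)
      qed
    qed
    have H: "u \<noteq> a \<and> withdrawal K q' u < withdrawal K q u \<and>
     (\<forall>j<K. pn j = q j \<or> pn j = q' j) \<and> (\<forall>j<K. p1 j = q j \<or> p1 j = q' j) \<and>
     (\<forall>i. int (withdrawal K pn i) = int (withdrawal K q i) - (if i = u then 1 else 0) + (if i = a then 1 else 0)) \<and>
     (\<forall>i. int (withdrawal K p1 i) = int (withdrawal K q' i) + (if i = u then 1 else 0) - (if i = a then 1 else 0))"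
      using \<open>u \<noteq> a\<close> uq c1 c2 wpn wp1 by (intro conjI)
    show ?thesis by (rule exI[of _ u], rule exI[of _ pn], rule exI[of _ p1], rule H)
  qed
qed




lemma feas_comb:
  assumes fq: "feasible_control L K x g q" and fq': "feasible_control L K x g q'"
    and c: "\<forall>j<K. p j = q j \<or> p j = q' j"
    and cap: "\<And>i. i \<in> {1..L} \<Longrightarrow> withdrawal K p i \<le> x i"
  shows "withdrawal K p \<in> feasible_W L K x g"
proof -
  have "feasible_control L K x g p"
    unfolding feasible_control_def
  proof (intro conjI allI impI ballI)
    fix j assume j: "j < K"
    have "q j \<le> L \<and> g (q j) j" "q' j \<le> L \<and> g (q' j) j"
      using fq fq' j unfolding feasible_control_def by auto
    then show "p j \<le> L" "g (p j) j" using c j by (metis)+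
  next
    fix i assume "i \<in> {1..L}"
    then show "card {j. j < K \<and> p j = i} \<le> x i" using cap unfolding withdrawal_def by simp
  qed
  then show ?thesis unfolding feasible_W_def by blast
qed

lemma pos_le_L:
  assumes fq: "feasible_control L K x g q" and "0 < withdrawal K q u"
  shows "u \<le> L"
proof -
  have "{j. j < K \<and> q j = u} \<noteq> {}" using assms(2) unfolding withdrawal_def
    by (metis card.empty less_irrefl)
  then obtain j where "j < K" "q j = u" by blast
  then show ?thesis using fq unfolding feasible_control_def by auto
qed

lemma core:
  assumes M1: "MB_at L K x g y" and M2: "MB_at L K x g y'" and aL: "a \<le> L"
    and big: "y' a \<ge> y a + 2"
  shows False
proof -
  obtain q where fq: "feasible_control L K x g q" and yq: "y = withdrawal K q"
    using M1 unfolding MB_at_def feasible_W_def by blast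
  obtain q' where fq': "feasible_control L K x g q'" and yq': "y' = withdrawal K q'"
    using M2 unfolding MB_at_def feasible_W_def by blast
  have lt: "withdrawal K q a < withdrawal K q' a" using big yq yq' by simp
  obtain u p p' where ua: "u \<noteq> a" and uq: "withdrawal K q' u < withdrawal K q u"
    and c1: "\<forall>j<K. p j = q j \<or> p j = q' j" and c2: "\<forall>j<K. p' j = q j \<or> p' j = q' j"
    and wp: "\<forall>i. int (withdrawal K p i) = int (withdrawal K q i) - (if i = u then 1 else 0) + (if i = a then 1 else 0)"
    and wp': "\<forall>i. int (withdrawal K p' i) = int (withdrawal K q' i) + (if i = u then 1 else 0) - (if i = a then 1 else 0)"
    using exch[OF refl lt] by blast
  have capq: "withdrawal K q i \<le> x i" if "i \<in> {1..L}" for i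
    using fq that unfolding feasible_control_def withdrawal_def by blast
  have capq': "withdrawal K q' i \<le> x i" if "i \<in> {1..L}" for i
    using fq' that unfolding feasible_control_def withdrawal_def by blast
  define z where "z = withdrawal K p"
  define w where "w = withdrawal K p'"
  have zF: "z \<in> feasible_W L K x g" unfolding z_def
  proof (rule feas_comb[OF fq fq' c1])
    fix i assume i: "i \<in> {1..L}"
    have "int (withdrawal K p i) \<le> int (x i)"
      using wp[rule_format, of i] capq[OF i] capq'[OF i] lt ua by (auto split: if_splits)
    then show "withdrawal K p i \<le> x i" by simp
  qed
  have wF: "w \<in> feasible_W L K x g" unfolding w_def
  proof (rule feas_comb[OF fq fq' c2])
    fix i assume i: "i \<in> {1..L}"
    have "int (withdrawal K p' i) \<le> int (x i)"
      using wp'[rule_format, of i] capq[OF i] capq'[OF i] uq ua by (auto split: if_splits)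
    then show "withdrawal K p' i \<le> x i" by simp
  qed
  have k1: "kappa L x y \<le> kappa L x z" using M1 zF unfolding MB_at_def by blast
  have k2: "kappa L x y' \<le> kappa L x w" using M2 wF unfolding MB_at_def by blast
  have Q1: "Q L (xhat x y) \<le> Q L (xhat x z)" using k1 kappa_Q[of L x y] kappa_Q[of L x z] by linarith
  have Q2: "Q L (xhat x y') \<le> Q L (xhat x w)" using k2 kappa_Q[of L x y'] kappa_Q[of L x w] by linarith
  have xz: "xhat x z i = xhat x y i + (if i = u then 1 else 0) - (if i = a then 1 else 0)" for i
    using wp[rule_format, of i] unfolding xhat_def z_def yq by simp
  have xw: "xhat x w i = xhat x y' i - (if i = u then 1 else 0) + (if i = a then 1 else 0)" for i
    using wp'[rule_format, of i] unfolding xhat_def w_def yq' by simp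
  have uL: "u \<le> L" using pos_le_L[OF fq] uq by simp
  show False
  proof (cases "u = 0")
    case True
    then have a1: "a \<in> {1..L}" using ua aL by auto
    have "Q L (xhat x z) < Q L (xhat x y)"
      by (rule Q_dummy[OF a1]) (use xz True ua in \<open>simp_all\<close>)
    then show False using Q1 by simp
  next
    case False
    then have u1: "u \<in> {1..L}" using uL by auto
    show False
    proof (cases "a = 0")
      case True
      have "Q L (xhat x w) < Q L (xhat x y')"
        by (rule Q_dummy[OF u1]) (use xw True ua in \<open>simp_all\<close>)
      then show False using Q2 by simp
    next
      case False
      then have a1: "a \<in> {1..L}" using aL by auto
      have h1: "\<not> xhat x y a \<ge> xhat x y u + 2"
      proof
        assume gap: "xhat x y a \<ge> xhat x y u + 2"
        have "Q L (xhat x z) < Q L (xhat x y)"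
          by (rule Q_real[OF a1 u1 ua[symmetric] gap]) (use xz ua in \<open>simp_all\<close>)
        then show False using Q1 by simp
      qed
      have h2: "\<not> xhat x y' u \<ge> xhat x y' a + 2"
      proof
        assume gap: "xhat x y' u \<ge> xhat x y' a + 2"
        have "Q L (xhat x w) < Q L (xhat x y')"
          by (rule Q_real[OF u1 a1 ua gap]) (use xw ua in \<open>simp_all\<close>)
        then show False using Q2 by simp
      qed
      have "y' u < y u" using uq yq yq' by simp
      then show False using h1 h2 big unfolding xhat_def by linarith
    qed
  qed
qed

lemma kappa_cong:
  assumes "\<forall>i\<le>L. y i = y' i"
  shows "kappa L x y = kappa L x y'"
proof -
  have "\<forall>i\<le>L. xhat x y i = xhat x y' i" using assms by (simp add: xhat_def)
  then have m: "map (xhat x y) [1..<L+1] = map (xhat x y') [1..<L+1]"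
    by (intro map_cong refl) auto
  have "xhat x y 0 = xhat x y' 0" using assms by (simp add: xhat_def)
  then show ?thesis unfolding kappa_def Let_def m by (simp only:)
qed

theorem lemma1:
  fixes L K :: nat and x :: "nat \<Rightarrow> nat" and g :: "nat \<Rightarrow> nat \<Rightarrow> bool"
    and y yMB :: "nat \<Rightarrow> nat"
  assumes "x 0 = 0"
    and "\<forall>j<K. g 0 j"
    and "y \<in> feasible_W L K x g"
    and "MB_at L K x g yMB"
  shows "((\<forall>i\<le>L. int (yMB i) - int (y i) = 0) \<longrightarrow> MB_at L K x g y) \<and>
         (MB_at L K x g y \<longrightarrow> (\<forall>i\<le>L. int (yMB i) - int (y i) \<in> {-1, 0, 1}))"
proof (intro conjI impI allI)
  assume h: "\<forall>i\<le>L. int (yMB i) - int (y i) = 0"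
  then have "\<forall>i\<le>L. y i = yMB i" by simp
  then have "kappa L x y = kappa L x yMB" by (rule kappa_cong)
  then show "MB_at L K x g y" using assms(3,4) unfolding MB_at_def by simp
next
  fix i assume My: "MB_at L K x g y" and iL: "i \<le> L"
  have n1: "\<not> yMB i \<ge> y i + 2" using core[OF My assms(4) iL] by blast
  have n2: "\<not> y i \<ge> yMB i + 2" using core[OF assms(4) My iL] by blast
  show "int (yMB i) - int (y i) \<in> {-1, 0, 1}" using n1 n2 by auto
qed


end
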